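(* Let $X$ be a finite set and $k^*<k<|X|$ integers with $2k-k^*\le|X|$. Let $\mathcal{P}\subseteq\binom{X}{k}$ be such that whenever $Z,Y\in\binom{X}{k}$ satisfy $|Z\cap Y|=k^*$, we have $Z\in\mathcal{P}\Leftrightarrow Y\in\mathcal{P}$. Then either $\mathcal{P}=\emptyset$ or $\mathcal{P}=\binom{X}{k}$, or else $|X|=2k$, $k^*=0$, and for every $Y\in\binom{X}{k}$ we have $Y\in\mathcal{P}\Leftrightarrow X\setminus Y\in\mathcal{P}$ (i.e. $\mathcal{P}$ is a union of pairs $\{Y,X\setminus Y\}$).
   Context: $\binom{X}{k}=\{Y\subseteq X:|Y|=k\}$. *)

theory Defs
  imports Main
begin

definition binom :: "'a set \<Rightarrow> nat \<Rightarrow> 'a set set" where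
  "binom X k = {Y. Y \<subseteq> X \<and> card Y = k}"

end

theory Submission
  imports Defs
begin

lemma swap_path:
  fixes X :: "'a set" and k s :: nat
  assumes fin: "finite X" and sk: "s < k" and n: "2 * k - s \<le> card X"
    and nd: "s \<ge> 1 \<or> 2 * k < card X"
    and Z: "Z \<in> binom X k" and a: "a \<in> Z" and b: "b \<in> X - Z"
  shows "\<exists>Y \<in> binom X k. card (Y \<inter> Z) = s \<and> card (Y \<inter> insert b (Z - {a})) = s"
proof -
  have ZX: "Z \<subseteq> X" and cZ: "card Z = k" using Z by (auto simp: binom_def)
  have finZ: "finite Z" using ZX fin finite_subset by blast
  define A where "A = Z - {a}"
  have cA: "card A = k - 1" using cZ a finZ by (simp add: A_def)
  define Out where "Out = X - insert b Z"
  have finOut: "finite Out" using fin by (simp add: Out_def)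
  have cOut: "card Out = card X - k - 1"
  proof -
    have "insert b Z \<subseteq> X" using ZX b by auto
    moreover have "card (insert b Z) = k + 1" using b finZ cZ by simp
    moreover have "finite (insert b Z)" using finZ by simp
    ultimately show ?thesis unfolding Out_def using card_Diff_subset[of "insert b Z" X]
      by simp
  qed
  have OZ: "Out \<inter> Z = {}" "b \<notin> Out" "Out \<subseteq> X" by (auto simp: Out_def)
  show ?thesis
  proof (cases "s \<ge> 1")
    case True
    have le1: "s - 1 \<le> card A" using cA sk by simp
    obtain S where S: "S \<subseteq> A" "card S = s - 1"
      using obtain_subset_with_card_n[OF le1] by blast
    have le2: "k - s - 1 \<le> card Out" using cOut n sk True by simp
    obtain T where T: "T \<subseteq> Out" "card T = k - s - 1"
      using obtain_subset_with_card_n[OF le2] by blast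
    have finS: "finite S" using S finZ A_def finite_subset by blast
    have finT: "finite T" using T finOut finite_subset by blast
    define Y where "Y = insert a (insert b (S \<union> T))"
    have ST: "S \<inter> T = {}" using S T OZ A_def by auto
    have abST: "a \<notin> S \<union> T" "b \<notin> S \<union> T" "a \<noteq> b" using S T OZ A_def b a by auto
    have cY: "card Y = k" unfolding Y_def using abST finS finT ST S T sk True
      by (simp add: card_Un_disjoint)
    have YX: "Y \<subseteq> X" unfolding Y_def using S T OZ A_def ZX a b by auto
    have i1: "Y \<inter> Z = insert a S" unfolding Y_def using S T OZ A_def a b by auto
    have i2: "Y \<inter> insert b (Z - {a}) = insert b S" unfolding Y_def using S T OZ A_def a b by auto
    have "card (insert a S) = s" "card (insert b S) = s"
      using S abST finS True by auto
    then show ?thesis using i1 i2 cY YX by (auto simp: binom_def)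
  next
    case False
    then have s0: "s = 0" by simp
    have le3: "k \<le> card Out" using cOut nd s0 by simp
    obtain T where T: "T \<subseteq> Out" "card T = k"
      using obtain_subset_with_card_n[OF le3] by blast
    have "T \<inter> Z = {}" "T \<inter> insert b (Z - {a}) = {}" using T OZ by auto
    moreover have "T \<subseteq> X" using T OZ by auto
    ultimately show ?thesis using T s0 by (auto simp: binom_def intro!: bexI[of _ T])
  qed
qed

theorem claim12p3:
  fixes X :: "'a set" and P :: "'a set set" and k ks :: nat
  assumes "finite X"
    and "ks < k" and "k < card X" and "2 * k - ks \<le> card X"
    and "P \<subseteq> binom X k"
    and "\<And>Z Y. Z \<in> binom X k \<Longrightarrow> Y \<in> binom X k \<Longrightarrow> card (Z \<inter> Y) = ks
            \<Longrightarrow> (Z \<in> P \<longleftrightarrow> Y \<in> P)"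
  shows "P = {} \<or> P = binom X k \<or>
         (card X = 2 * k \<and> ks = 0 \<and> (\<forall>Y \<in> binom X k. Y \<in> P \<longleftrightarrow> X - Y \<in> P))"
proof (cases "card X = 2 * k \<and> ks = 0")
  case True
  have "\<forall>Y \<in> binom X k. Y \<in> P \<longleftrightarrow> X - Y \<in> P"
  proof
    fix Y assume Y: "Y \<in> binom X k"
    then have YX: "Y \<subseteq> X" "card Y = k" by (auto simp: binom_def)
    have "card (X - Y) = k" using YX True assms(1) by (simp add: card_Diff_subset finite_subset)
    then have "X - Y \<in> binom X k" by (auto simp: binom_def)
    moreover have "Y \<inter> (X - Y) = {}" by auto
    ultimately show "Y \<in> P \<longleftrightarrow> X - Y \<in> P" using assms(6)[OF Y] True by auto
  qed
  then show ?thesis using True by blast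
next
  case False
  have nd: "ks \<ge> 1 \<or> 2 * k < card X" using False assms(4) by auto
  have sw: "Z \<in> P \<longleftrightarrow> insert b (Z - {a}) \<in> P"
    if Z: "Z \<in> binom X k" and a: "a \<in> Z" and b: "b \<in> X - Z" for Z a b
  proof -
    obtain Y where Y: "Y \<in> binom X k" "card (Y \<inter> Z) = ks" "card (Y \<inter> insert b (Z - {a})) = ks"
      using swap_path[OF assms(1) assms(2) assms(4) nd Z a b] by blast
    have ZX: "Z \<subseteq> X" "card Z = k" using Z by (auto simp: binom_def)
    have "finite Z" using ZX assms(1) finite_subset by blast
    moreover have "k > 0" using ZX a \<open>finite Z\<close> card_gt_0_iff by blast
    ultimately have "card (insert b (Z - {a})) = k" using ZX a b by (simp add: card_insert_if)
    then have Z1: "insert b (Z - {a}) \<in> binom X k" using ZX a b by (auto simp: binom_def)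
    show ?thesis using assms(6)[OF Y(1) Z Y(2)] assms(6)[OF Y(1) Z1 Y(3)] by blast
  qed
  have conn: "\<forall>Z \<in> binom X k. card (Z - W) = m \<longrightarrow> (Z \<in> P \<longleftrightarrow> W \<in> P)"
    if W: "W \<in> binom X k" for W m
  proof (induction m)
    case 0
    show ?case
    proof (intro ballI impI)
      fix Z assume Z: "Z \<in> binom X k" and c: "card (Z - W) = 0"
      have ZX: "Z \<subseteq> X" "card Z = k" and WX: "W \<subseteq> X" "card W = k"
        using Z W by (auto simp: binom_def)
      have fZ: "finite Z" and fW: "finite W" using ZX WX assms(1) finite_subset by blast+
      have "Z \<subseteq> W" using c fZ by simp
      then have "Z = W" using card_subset_eq[OF fW] ZX WX by simp
      then show "Z \<in> P \<longleftrightarrow> W \<in> P" by simp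
    qed
  next
    case (Suc m)
    show ?case
    proof (intro ballI impI)
      fix Z assume Z: "Z \<in> binom X k" and c: "card (Z - W) = Suc m"
      have ZX: "Z \<subseteq> X" "card Z = k" and WX: "W \<subseteq> X" "card W = k"
        using Z W by (auto simp: binom_def)
      have fZ: "finite Z" and fW: "finite W" using ZX WX assms(1) finite_subset by blast+
      have "card (Z - W) = card (W - Z)"
        using fZ fW ZX WX by (simp add: card_Diff_subset_Int Int_commute)
      then have "W - Z \<noteq> {}" using c by (metis card.empty Zero_not_Suc)
      then obtain b where b: "b \<in> W" "b \<notin> Z" by auto
      have "Z - W \<noteq> {}" using c by (metis card.empty Zero_not_Suc)
      then obtain a where a: "a \<in> Z" "a \<notin> W" by auto
      define Z1 where "Z1 = insert b (Z - {a})"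
      have "k > 0" using ZX a fZ card_gt_0_iff by blast
      then have "card (insert b (Z - {a})) = k" using fZ ZX a b by (simp add: card_insert_if)
      then have Z1: "Z1 \<in> binom X k" using ZX WX a b by (auto simp: binom_def Z1_def)
      have "Z1 - W = (Z - W) - {a}" using a b by (auto simp: Z1_def)
      then have "card (Z1 - W) = m" using c a fZ by simp
      then have "Z1 \<in> P \<longleftrightarrow> W \<in> P" using Suc Z1 by blast
      moreover have "Z \<in> P \<longleftrightarrow> Z1 \<in> P" unfolding Z1_def using sw[OF Z a(1)] b WX by auto
      ultimately show "Z \<in> P \<longleftrightarrow> W \<in> P" by blast
    qed
  qed
  show ?thesis
  proof (cases "P = {}")
    case False
    then obtain W where W: "W \<in> P" by auto
    then have Wb: "W \<in> binom X k" using assms(5) by auto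
    have "binom X k \<subseteq> P" using conn[OF Wb] W by blast
    then show ?thesis using assms(5) by blast
  qed simp
qed

end
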